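(* Let $\mathbf a=(a_1,\dots,a_q)$ be a graceful permutation of length $q$. Suppose $\mathbf a$ has two adjacent entries $x$ and $y$ (in either order) with $x<y<2(y-x)$, and put $p=2(y-x)$. Then there is a graceful permutation of length $2p+q$ with first element $a_1+p$ and last element $a_q+p$.
   Context: A graceful permutation of length $n$ is an arrangement $(a_1,\dots,a_n)$ of the integers $\{0,1,\dots,n-1\}$ whose absolute differences $|a_{i+1}-a_i|$ ($1\le i\le n-1$) are exactly $\{1,\dots,n-1\}$. *)

theory Defs
  imports Main
begin

text \<open>Lists are 0-indexed, so entry a_(i+1) is xs ! i.\<close>

definition graceful :: "nat list \<Rightarrow> bool" where
  "graceful xs \<longleftrightarrow>
     distinct xs \<and> set xs = {0..<length xs} \<and>
     {nat \<bar>int (xs ! (i+1)) - int (xs ! i)\<bar> | i. i + 1 < length xs} = {1..<length xs}"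

end

theory Submission imports Defs begin

definition ad :: "nat \<Rightarrow> nat \<Rightarrow> nat" where
  "ad a b = (if a \<le> b then b - a else a - b)"

fun dset :: "nat list \<Rightarrow> nat set" where
  "dset (a # b # xs) = insert (ad a b) (dset (b # xs))"
| "dset _ = {}"

fun alt :: "nat \<Rightarrow> nat list \<Rightarrow> bool" where
  "alt T (a # b # xs) = ((a < T) \<noteq> (b < T) \<and> alt T (b # xs))"
| "alt T _ = True"

lemma dset_Cons: "dset (a # xs) = (if xs = [] then {} else insert (ad a (hd xs)) (dset xs))"
  by (cases xs) auto

lemma alt_Cons: "alt T (a # xs) = (if xs = [] then True else ((a < T) \<noteq> (hd xs < T) \<and> alt T xs))"
  by (cases xs) auto

lemma dset_append:
  "dset (xs @ ys) = dset xs \<union> dset ys \<union> (if xs = [] \<or> ys = [] then {} else {ad (last xs) (hd ys)})"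
  by (induction xs rule: dset.induct) (auto simp: dset_Cons)

lemma alt_append:
  "alt T (xs @ ys) = (alt T xs \<and> alt T ys \<and> (xs = [] \<or> ys = [] \<or> (last xs < T) \<noteq> (hd ys < T)))"
  by (induction xs rule: alt.induct) (auto simp: alt_Cons)

lemma ad_sym: "ad a b = ad b a" by (simp add: ad_def)

lemma dset_rev: "dset (rev xs) = dset xs"
  by (induction xs rule: dset.induct) (auto simp: dset_append ad_sym hd_rev)

lemma alt_rev: "alt T (rev xs) = alt T xs"
  by (induction xs rule: alt.induct) (auto simp: alt_append hd_rev)

lemma dset_comp: "\<forall>t\<in>set xs. t \<le> c \<Longrightarrow> dset (map (\<lambda>t. c - t) xs) = dset xs"
  by (induction xs rule: dset.induct) (auto simp: ad_def)

lemma alt_comp: "\<forall>t\<in>set xs. t \<le> c \<Longrightarrow> T \<le> c + 1 \<Longrightarrow> alt T xs \<Longrightarrow> alt (c + 1 - T) (map (\<lambda>t. c - t) xs)"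
  by (induction xs rule: alt.induct) auto

lemma dset_phi: "alt T xs \<Longrightarrow> dset (map (\<lambda>v. if v < T then v else v + off) xs) = (\<lambda>d. d + off) ` dset xs"
  by (induction xs rule: dset.induct) (auto simp: ad_def)

lemma alt_phi: "alt T xs \<Longrightarrow> T \<le> T' \<Longrightarrow> T' \<le> T + off \<Longrightarrow> alt T' (map (\<lambda>v. if v < T then v else v + off) xs)"
  by (induction xs rule: alt.induct) auto

lemma dset_shift: "dset (map (\<lambda>v. v + c) xs) = dset xs"
  by (induction xs rule: dset.induct) (auto simp: ad_def)

lemma dset_idx: "dset xs = {nat \<bar>int (xs ! (i+1)) - int (xs ! i)\<bar> | i. i + 1 < length xs}"
proof (induction xs rule: dset.induct)
  case (1 a b xs)
  have "{nat \<bar>int ((a # b # xs) ! (i+1)) - int ((a # b # xs) ! i)\<bar> | i. i + 1 < length (a # b # xs)}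
     = insert (ad a b) {nat \<bar>int ((b # xs) ! (i+1)) - int ((b # xs) ! i)\<bar> | i. i + 1 < length (b # xs)}"
    (is "?L = ?R")
  proof
    show "?L \<subseteq> ?R"
    proof
      fix z assume "z \<in> ?L"
      then obtain i where i: "z = nat \<bar>int ((a # b # xs) ! (i+1)) - int ((a # b # xs) ! i)\<bar>" "i + 1 < length (a # b # xs)" by blast
      show "z \<in> ?R"
      proof (cases i)
        case 0 then show ?thesis using i by (auto simp: ad_def)
      next
        case (Suc j) then show ?thesis using i by auto
      qed
    qed
  next
    show "?R \<subseteq> ?L"
    proof
      fix z assume "z \<in> ?R"
      then consider "z = ad a b" | j where "z = nat \<bar>int ((b # xs) ! (j+1)) - int ((b # xs) ! j)\<bar>" "j + 1 < length (b # xs)" by blast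
      then show "z \<in> ?L"
      proof cases
        case 1
        then have "z = nat \<bar>int ((a # b # xs) ! (0+1)) - int ((a # b # xs) ! 0)\<bar>" by (auto simp: ad_def)
        then show ?thesis by fastforce
      next
        case 2
        then have "z = nat \<bar>int ((a # b # xs) ! (Suc j+1)) - int ((a # b # xs) ! Suc j)\<bar>" by auto
        then show ?thesis using 2 by fastforce
      qed
    qed
  qed
  then show ?case using 1 by simp
qed auto

lemma graceful_iff: "graceful xs \<longleftrightarrow> distinct xs \<and> set xs = {0..<length xs} \<and> dset xs = {1..<length xs}"
  unfolding graceful_def dset_idx by simp

fun stair :: "nat \<Rightarrow> nat \<Rightarrow> nat \<Rightarrow> nat list" where
  "stair u v 0 = [u]"
| "stair u v (Suc n) = u # v # stair (Suc u) (v - 1) n"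

lemma stair_props:
  "u + 2*n \<le> v \<Longrightarrow> length (stair u v n) = 2*n+1 \<and> hd (stair u v n) = u \<and> last (stair u v n) = u + n
   \<and> set (stair u v n) = {u..u+n} \<union> {v+1-n..v} \<and> dset (stair u v n) = {v+1-u-2*n..v-u}
   \<and> (\<forall>T. u + n < T \<and> T \<le> v + 1 - n \<longrightarrow> alt T (stair u v n))"
proof (induction n arbitrary: u v)
  case 0
  then show ?case by auto
next
  case (Suc n)
  have IH: "length (stair (Suc u) (v-1) n) = 2*n+1 \<and> hd (stair (Suc u) (v-1) n) = Suc u \<and> last (stair (Suc u) (v-1) n) = Suc u + n
   \<and> set (stair (Suc u) (v-1) n) = {Suc u..Suc u+n} \<union> {v-1+1-n..v-1} \<and> dset (stair (Suc u) (v-1) n) = {v-1+1-Suc u-2*n..v-1-Suc u}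
   \<and> (\<forall>T. Suc u + n < T \<and> T \<le> v - 1 + 1 - n \<longrightarrow> alt T (stair (Suc u) (v-1) n))"
    using Suc by simp
  have ne: "stair (Suc u) (v-1) n \<noteq> []" using IH by auto
  show ?case
  proof (intro conjI allI impI)
    show "length (stair u v (Suc n)) = 2 * Suc n + 1" using IH by simp
    show "hd (stair u v (Suc n)) = u" by simp
    show "last (stair u v (Suc n)) = u + Suc n" using IH ne by simp
    show "set (stair u v (Suc n)) = {u..u + Suc n} \<union> {v + 1 - Suc n..v}" using IH Suc.prems by auto
    show "dset (stair u v (Suc n)) = {v + 1 - u - 2 * Suc n..v - u}"
      using IH ne Suc.prems by (auto simp: dset_Cons ad_def)
    fix T assume "u + Suc n < T \<and> T \<le> v + 1 - Suc n"
    then show "alt T (stair u v (Suc n))" using IH ne Suc.prems by (auto simp: alt_Cons)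
  qed
qed

lemma img_add: "(\<lambda>d. d + k) ` {a..<b} = {a+k..<b+(k::nat)}"
proof
  show "{a+k..<b+k} \<subseteq> (\<lambda>d. d + k) ` {a..<b}"
  proof
    fix x assume "x \<in> {a+k..<b+k}"
    then show "x \<in> (\<lambda>d. d + k) ` {a..<b}" by (intro image_eqI[where x="x-k"]) auto
  qed
qed auto

function G :: "nat \<Rightarrow> nat \<Rightarrow> nat list" where
  "G P s = (if P \<le> s then [] else if P \<le> 2*s then
      stair s (2*P-1-s) (P-s-1) @ [P] @ map (\<lambda>v. if v < s then v else v + (2*P-2*s)) (G s (2*s-P))
    else if P = 2*s+1 then stair s (3*s) s @ map (\<lambda>t. 4*s+1-t) (stair 0 (4*s+1) s)
    else rev (map (\<lambda>v. 2*P-1-v) (G P (P-1-s))))"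
  by pat_completeness auto
termination by (relation "measure (\<lambda>(P,s). 2*P + (if P \<le> 2*s then 0 else 1))") auto

declare G.simps [simp del]

lemma G_props:
  "s < P \<Longrightarrow> length (G P s) = 2*P \<and> set (G P s) = {0..<2*P} \<and> dset (G P s) = {1..<2*P}
    \<and> alt P (G P s) \<and> hd (G P s) = s \<and> last (G P s) = P + s"
proof (induction P s rule: G.induct)
  case (1 P s)
  show ?case
  proof (cases "P \<le> 2*s")
    case A: True
    let ?phi = "\<lambda>v. if v < s then v else v + (2*P-2*s)"
    let ?st = "stair s (2*P-1-s) (P-s-1)"
    let ?H = "G s (2*s-P)"
    have eq: "G P s = ?st @ [P] @ map ?phi ?H" using A 1(3) by (simp add: G.simps)
    have IH: "length ?H = 2*s \<and> set ?H = {0..<2*s} \<and> dset ?H = {1..<2*s}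
    \<and> alt s ?H \<and> hd ?H = 2*s-P \<and> last ?H = s + (2*s-P)"
      using 1(1) A 1(3) by simp
    have ST: "length ?st = 2*(P-s-1)+1 \<and> hd ?st = s \<and> last ?st = s + (P-s-1)
      \<and> set ?st = {s..s+(P-s-1)} \<union> {2*P-1-s+1-(P-s-1)..2*P-1-s} \<and> dset ?st = {2*P-1-s+1-s-2*(P-s-1)..2*P-1-s-s}
      \<and> (\<forall>T. s + (P-s-1) < T \<and> T \<le> 2*P-1-s + 1 - (P-s-1) \<longrightarrow> alt T ?st)"
      by (rule stair_props) (use 1(3) in simp)
    have Hne: "?H \<noteq> []" using IH A 1(3) by auto
    have stne: "?st \<noteq> []" using ST by auto
    have aH: "alt s ?H" and dH0: "dset ?H = {1..<2*s}" using IH by blast+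
    have altH: "alt P (map ?phi ?H)" by (rule alt_phi[OF aH]) (use A 1(3) in auto)
    have dH: "dset (map ?phi ?H) = (\<lambda>d. d + (2*P-2*s)) ` {1..<2*s}" unfolding dset_phi[OF aH] dH0 ..
    have dH2: "(\<lambda>d. d + (2*P-2*s)) ` {1..<2*s} = {2*P-2*s+1..<2*P}"
    proof -
      have "(\<lambda>d. d + (2*P-2*s)) ` {1..<2*s} = {1+(2*P-2*s)..<2*s+(2*P-2*s)}" by (rule img_add)
      also have "\<dots> = {2*P-2*s+1..<2*P}" using A 1(3) by simp
      finally show ?thesis .
    qed
    have sH: "set (map ?phi ?H) = {0..<s} \<union> {2*P-s..<2*P}"
    proof -
      have u: "{0..<2*s} = {0..<s} \<union> {s..<2*s}" by auto
      have i1: "?phi ` {0..<s} = {0..<s}" by (auto simp: image_iff)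
      have "?phi ` {s..<2*s} = (\<lambda>d. d + (2*P-2*s)) ` {s..<2*s}" by (rule image_cong) auto
      also have "\<dots> = {s + (2*P-2*s)..<2*s + (2*P-2*s)}" by (rule img_add)
      also have "\<dots> = {2*P-s..<2*P}" using A 1(3) by simp
      finally have i2: "?phi ` {s..<2*s} = {2*P-s..<2*P}" .
      have sH0: "set ?H = {0..<2*s}" using IH by blast
      have "set (map ?phi ?H) = ?phi ` set ?H" by (rule set_map)
      also have "\<dots> = ?phi ` {0..<s} \<union> ?phi ` {s..<2*s}" unfolding sH0 u image_Un by (rule refl)
      also have "\<dots> = {0..<s} \<union> {2*P-s..<2*P}" unfolding i1 i2 by (rule refl)
      finally show ?thesis .
    qed
    have h0: "hd ?H = 2*s-P" and l0: "last ?H = s + (2*s-P)" using IH by blast+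
    have lt: "2*s-P < s" using A 1(3) by simp
    have "hd (map ?phi ?H) = ?phi (hd ?H)" by (rule hd_map[OF Hne])
    then have hdH: "hd (map ?phi ?H) = 2*s-P" using h0 lt by simp
    have lm: "last (map ?phi ?H) = ?phi (last ?H)" by (rule last_map[OF Hne])
    have pv: "?phi (s + (2*s-P)) = P + s" using A 1(3) by simp
    have lastH: "last (map ?phi ?H) = P + s" unfolding lm l0 pv ..
    have b1: "s + (P-s-1) = P - 1" "2*P-1-s+1-(P-s-1) = P+1" "2*P-1-s+1-s-2*(P-s-1) = 2"
      "2*P-1-s-s = 2*P-2*s-1" using A 1(3) by auto
    have stS: "set ?st = {s..<P} \<union> {P+1..<2*P-s}"
    proof -
      have "set ?st = {s..P-1} \<union> {P+1..2*P-1-s}" using ST b1 by simp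
      also have "\<dots> = {s..<P} \<union> {P+1..<2*P-s}" using A 1(3) by auto
      finally show ?thesis .
    qed
    have stD: "dset ?st = {2..<2*P-2*s}"
    proof -
      have "dset ?st = {2..2*P-2*s-1}" using ST b1 by simp
      also have "\<dots> = {2..<2*P-2*s}" using A 1(3) by auto
      finally show ?thesis .
    qed
    have stL: "last ?st = P - 1" using ST b1 by simp
    have stH: "hd ?st = s" using ST by simp
    have stA: "alt P ?st" using ST b1 A 1(3) by simp
    have stLen: "length ?st = 2*(P-s-1)+1" using ST by simp
    have lenH: "length ?H = 2*s" using IH by blast
    have Mne: "map ?phi ?H \<noteq> []" using Hne by simp
    have ad1: "ad (P-1) P = 1" using 1(3) by (simp add: ad_def)
    have ad2: "ad P (2*s-P) = 2*P-2*s" unfolding ad_def using A 1(3) by arith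
    show ?thesis unfolding eq
    proof (intro conjI)
      show "length (?st @ [P] @ map ?phi ?H) = 2*P" using stLen lenH A 1(3) by simp
      have "set (?st @ [P] @ map ?phi ?H) = set ?st \<union> {P} \<union> set (map ?phi ?H)" by simp
      also have "\<dots> = {0..<2*P}" unfolding stS sH using A 1(3) by auto
      finally show "set (?st @ [P] @ map ?phi ?H) = {0..<2*P}" .
      have "dset (?st @ [P] @ map ?phi ?H) = dset ?st \<union> {ad (last ?st) P} \<union> ({ad P (hd (map ?phi ?H))} \<union> dset (map ?phi ?H))"
        using stne Mne by (auto simp: dset_append dset_Cons)
      also have "\<dots> = {2..<2*P-2*s} \<union> {1} \<union> ({2*P-2*s} \<union> {2*P-2*s+1..<2*P})"
        unfolding stD stL hdH ad1 ad2 dH dH2 ..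
      also have "\<dots> = {1..<2*P}" using A 1(3) by auto
      finally show "dset (?st @ [P] @ map ?phi ?H) = {1..<2*P}" .
      show "alt P (?st @ [P] @ map ?phi ?H)"
        using stA altH hdH Mne stne stL lt A 1(3) by (simp add: alt_append alt_Cons)
      show "hd (?st @ [P] @ map ?phi ?H) = s" using stH stne by simp
      show "last (?st @ [P] @ map ?phi ?H) = P + s" using lastH Mne by simp
    qed
  next
    case B: False
    show ?thesis
    proof (cases "P = 2*s+1")
      case C: True
      let ?A = "stair s (3*s) s"
      let ?Zs = "stair 0 (4*s+1) s"
      let ?B = "map (\<lambda>t. 4*s+1-t) ?Zs"
      have eq: "G P s = ?A @ ?B" using B C by (simp add: G.simps)
      have SA: "length ?A = 2*s+1 \<and> hd ?A = s \<and> last ?A = s + s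
      \<and> set ?A = {s..s+s} \<union> {3*s+1-s..3*s} \<and> dset ?A = {3*s+1-s-2*s..3*s-s}
      \<and> (\<forall>T. s + s < T \<and> T \<le> 3*s + 1 - s \<longrightarrow> alt T ?A)"
        by (rule stair_props) simp
      have SB: "length ?Zs = 2*s+1 \<and> hd ?Zs = 0 \<and> last ?Zs = 0 + s
      \<and> set ?Zs = {0..0+s} \<union> {4*s+1+1-s..4*s+1} \<and> dset ?Zs = {4*s+1+1-0-2*s..4*s+1-0}
      \<and> (\<forall>T. 0 + s < T \<and> T \<le> 4*s+1 + 1 - s \<longrightarrow> alt T ?Zs)"
        by (rule stair_props) simp
      have le: "\<forall>t\<in>set ?Zs. t \<le> 4*s+1" using SB by auto
      have Ane: "?A \<noteq> []" and B0ne: "?Zs \<noteq> []" using SA SB by auto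
      have altB: "alt (4*s+1+1-(2*s+1)) ?B" by (rule alt_comp[OF le]) (use SB in auto)
      have dB: "dset ?B = dset ?Zs" by (rule dset_comp[OF le])
      have sB: "set ?B = {0..<s} \<union> {3*s+1..4*s+1}"
      proof
        show "set ?B \<subseteq> {0..<s} \<union> {3*s+1..4*s+1}" using SB by auto
        show "{0..<s} \<union> {3*s+1..4*s+1} \<subseteq> set ?B"
        proof
          fix z assume z: "z \<in> {0..<s} \<union> {3*s+1..4*s+1}"
          have "4*s+1-z \<in> set ?Zs" using SB z by auto
          moreover have "z = 4*s+1-(4*s+1-z)" using z by auto
          ultimately show "z \<in> set ?B" unfolding set_map by (rule rev_image_eqI)
        qed
      qed
      have hdB: "hd ?B = 4*s+1" using SB B0ne by (simp add: hd_map)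
      have lastB: "last ?B = 3*s+1" using SB B0ne by (simp add: last_map)
      show ?thesis unfolding eq
      proof (intro conjI)
        show "length (?A @ ?B) = 2*P" using SA SB C by simp
        show "set (?A @ ?B) = {0..<2*P}" using SA sB C by auto
        show "dset (?A @ ?B) = {1..<2*P}" using SA SB dB hdB Ane B0ne C by (auto simp: dset_append ad_def)
        show "alt P (?A @ ?B)" using SA altB hdB Ane B0ne C by (auto simp: alt_append)
        show "hd (?A @ ?B) = s" using SA Ane by simp
        show "last (?A @ ?B) = P + s" using lastB B0ne C by simp
      qed
    next
      case C: False
      let ?H = "G P (P-1-s)"
      have eq: "G P s = rev (map (\<lambda>v. 2*P-1-v) ?H)" using B C 1(3) by (simp add: G.simps)
      have IH: "length ?H = 2*P \<and> set ?H = {0..<2*P} \<and> dset ?H = {1..<2*P}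
        \<and> alt P ?H \<and> hd ?H = P-1-s \<and> last ?H = P + (P-1-s)"
        using 1(2) B C 1(3) by simp
      have le: "\<forall>t\<in>set ?H. t \<le> 2*P-1" using IH by auto
      have Hne: "?H \<noteq> []" using IH 1(3) by auto
      have altB: "alt (2*P-1+1-P) (map (\<lambda>v. 2*P-1-v) ?H)" by (rule alt_comp[OF le]) (use IH in auto)
      have sB: "set (map (\<lambda>v. 2*P-1-v) ?H) = {0..<2*P}"
      proof
        show "set (map (\<lambda>v. 2*P-1-v) ?H) \<subseteq> {0..<2*P}" using IH by auto
        show "{0..<2*P} \<subseteq> set (map (\<lambda>v. 2*P-1-v) ?H)"
        proof
          fix z assume z: "z \<in> {0..<2*P}"
          have "2*P-1-z \<in> set ?H" using IH z by auto
          moreover have "z = 2*P-1-(2*P-1-z)" using z by auto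
          ultimately show "z \<in> set (map (\<lambda>v. 2*P-1-v) ?H)" unfolding set_map by (rule rev_image_eqI)
        qed
      qed
      show ?thesis unfolding eq
      proof (intro conjI)
        show "length (rev (map (\<lambda>v. 2*P-1-v) ?H)) = 2*P" using IH by simp
        show "set (rev (map (\<lambda>v. 2*P-1-v) ?H)) = {0..<2*P}" using sB by simp
        show "dset (rev (map (\<lambda>v. 2*P-1-v) ?H)) = {1..<2*P}" using dset_comp[OF le] IH by (simp add: dset_rev)
        show "alt P (rev (map (\<lambda>v. 2*P-1-v) ?H))" using altB 1(3) by (simp add: alt_rev)
        show "hd (rev (map (\<lambda>v. 2*P-1-v) ?H)) = s" using IH Hne 1(3) B by (simp add: hd_rev last_map)
        show "last (rev (map (\<lambda>v. 2*P-1-v) ?H)) = P + s" using IH Hne 1(3) B by (simp add: last_rev hd_map)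
      qed
    qed
  qed
qed


lemma img_add2: "(\<lambda>d. d + k) ` {a..<b} = {a+k..<b+(k::nat)}" by (rule img_add)

lemma insert_lemma:
  fixes a S :: "nat list" and i p :: nat
  assumes g: "graceful a" and i: "i + 1 < length a"
    and lS: "length S = 2*p"
    and sS: "set S = {0..<p} \<union> {p + length a..<2*p + length a}"
    and dS: "dset S \<union> {ad (a!i + p) (hd S), ad (last S) (a!(i+1) + p)}
              = {ad (a!i) (a!(i+1))} \<union> {length a..<2*p + length a}"
    and Sne: "S \<noteq> []"
  shows "graceful (take (i+1) (map (\<lambda>v. v + p) a) @ S @ drop (i+1) (map (\<lambda>v. v + p) a))
     \<and> length (take (i+1) (map (\<lambda>v. v + p) a) @ S @ drop (i+1) (map (\<lambda>v. v + p) a)) = 2*p + length a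
     \<and> hd (take (i+1) (map (\<lambda>v. v + p) a) @ S @ drop (i+1) (map (\<lambda>v. v + p) a)) = hd a + p
     \<and> last (take (i+1) (map (\<lambda>v. v + p) a) @ S @ drop (i+1) (map (\<lambda>v. v + p) a)) = last a + p"
proof -
  let ?A = "map (\<lambda>v. v + p) a"
  let ?T = "take (i+1) ?A" and ?D = "drop (i+1) ?A"
  let ?b = "?T @ S @ ?D"
  let ?q = "length a"
  have ga: "distinct a" "set a = {0..<?q}" "dset a = {1..<?q}" using g by (auto simp: graceful_iff)
  have Tne: "?T \<noteq> []" and Dne: "?D \<noteq> []" using i by auto
  have lastT: "last ?T = a!i + p" using i by (simp add: take_Suc_conv_app_nth take_map)
  have hdD: "hd ?D = a!(i+1) + p" using i by (simp add: hd_drop_conv_nth)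
  have lastt: "last (take (i+1) a) = a!i" using i by (simp add: take_Suc_conv_app_nth take_map)
  have hdd: "hd (drop (i+1) a) = a!(i+1)" using i by (simp add: hd_drop_conv_nth)
  have tne: "take (i+1) a \<noteq> []" and dne: "drop (i+1) a \<noteq> []" using i by auto
  have da: "dset a = dset (take (i+1) a) \<union> dset (drop (i+1) a) \<union> {ad (a!i) (a!(i+1))}"
  proof -
    have "dset a = dset (take (i+1) a @ drop (i+1) a)" by simp
    also have "\<dots> = dset (take (i+1) a) \<union> dset (drop (i+1) a) \<union> {ad (a!i) (a!(i+1))}"
      unfolding dset_append using tne dne lastt hdd by simp
    finally show ?thesis .
  qed
  have dT: "dset ?T = dset (take (i+1) a)" by (simp add: take_map dset_shift)
  have dD: "dset ?D = dset (drop (i+1) a)" by (simp add: drop_map dset_shift)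
  have db: "dset ?b = dset ?T \<union> dset ?D \<union> dset S \<union> {ad (a!i + p) (hd S), ad (last S) (a!(i+1) + p)}"
    unfolding dset_append using Tne Dne Sne lastT hdD by auto
  have dset_b: "dset ?b = {1..<2*p + ?q}"
  proof -
    have "dset ?b = dset a \<union> {?q..<2*p + ?q}" using db dT dD da dS by auto
    also have "\<dots> = {1..<2*p + ?q}" using ga(3) i by auto
    finally show ?thesis .
  qed
  have sA: "set ?A = {p..<p + ?q}" using ga(2) img_add2[of p 0 ?q] by (simp add: add.commute)
  have sb: "set ?b = {0..<2*p + ?q}"
  proof -
    have "set ?b = set ?A \<union> set S"
      by (metis Un_commute Un_left_commute append_take_drop_id set_append)
    also have "\<dots> = {0..<2*p + ?q}" using sA sS by auto
    finally show ?thesis .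
  qed
  have lb: "length ?b = 2*p + ?q" using lS i by (simp add: min_def)
  have cb: "card (set ?b) = length ?b" unfolding sb lb by simp
  have distb: "distinct ?b" by (rule card_distinct[OF cb])
  have hdb: "hd ?b = hd a + p" using Tne i by (simp add: hd_map)
  have ane: "a \<noteq> []" using i by auto
  have lastb: "last ?b = last a + p" using Dne i last_map[OF ane, of "\<lambda>v. v + p"] by simp
  show ?thesis using distb sb lb dset_b hdb lastb by (simp add: graceful_iff)
qed

theorem theorem5p6:
  fixes a :: "nat list" and x y i :: nat
  assumes "graceful a"
    and "i + 1 < length a"
    and "(a ! i = x \<and> a ! (i+1) = y) \<or> (a ! i = y \<and> a ! (i+1) = x)"
    and "x < y" and "y < 2 * (y - x)"
  shows "\<exists>b. graceful b \<and> length b = 2 * (2 * (y - x)) + length a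
              \<and> hd b = hd a + 2 * (y - x) \<and> last b = last a + 2 * (y - x)"
proof -
  define p where "p = 2 * (y - x)"
  define q where "q = length a"
  have yp: "y < p" using assms(5) p_def by simp
  have yq: "y < q" using assms(1,2,3) q_def unfolding graceful_iff
    by (metis atLeastLessThan_iff nth_mem add_lessD1 )
  have GP: "length (G p y) = 2*p \<and> set (G p y) = {0..<2*p} \<and> dset (G p y) = {1..<2*p}
    \<and> alt p (G p y) \<and> hd (G p y) = y \<and> last (G p y) = p + y" using G_props[OF yp] .
  let ?phi = "\<lambda>v. if v < p then v else v + q"
  let ?S = "map ?phi (G p y)"
  have Gne: "G p y \<noteq> []" using GP yp by auto
  have lS: "length ?S = 2*p" using GP by simp
  have sS: "set ?S = {0..<p} \<union> {p + q..<2*p + q}"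
  proof -
    have u: "{0..<2*p} = {0..<p} \<union> {p..<2*p}" by auto
    have i1: "?phi ` {0..<p} = {0..<p}" by (auto simp: image_iff)
    have "?phi ` {p..<2*p} = (\<lambda>d. d + q) ` {p..<2*p}" by (rule image_cong) auto
    also have "\<dots> = {p + q..<2*p + q}" by (rule img_add)
    finally have i2: "?phi ` {p..<2*p} = {p + q..<2*p + q}" .
    have sH0: "set (G p y) = {0..<2*p}" using GP by blast
    have "set ?S = ?phi ` set (G p y)" by (rule set_map)
    also have "\<dots> = ?phi ` {0..<p} \<union> ?phi ` {p..<2*p}" unfolding sH0 u image_Un by (rule refl)
    also have "\<dots> = {0..<p} \<union> {p + q..<2*p + q}" unfolding i1 i2 by (rule refl)
    finally show ?thesis .
  qed
  have dS: "dset ?S = {q+1..<2*p+q}"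
  proof -
    have aG: "alt p (G p y)" and dG: "dset (G p y) = {1..<2*p}" using GP by blast+
    have "dset ?S = (\<lambda>d. d + q) ` {1..<2*p}" unfolding dset_phi[OF aG] dG ..
    also have "\<dots> = {1+q..<2*p+q}" by (rule img_add)
    finally show ?thesis by simp
  qed
  have hS: "hd ?S = y" using GP Gne yp by (simp add: hd_map)
  have lS': "last ?S = p + y + q" using GP Gne yp by (simp add: last_map)
  have Sne: "?S \<noteq> []" using Gne by simp
  from assms(3) show ?thesis
  proof
    assume c: "a ! i = x \<and> a ! (i+1) = y"
    have "dset ?S \<union> {ad (a!i + p) (hd ?S), ad (last ?S) (a!(i+1) + p)}
              = {ad (a!i) (a!(i+1))} \<union> {length a..<2*p + length a}"
    proof -
      have e1: "ad (a!i + p) (hd ?S) = y - x" unfolding hS c[THEN conjunct1] ad_def using assms(4,5) p_def by arith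
      have e2: "ad (last ?S) (a!(i+1) + p) = q" unfolding lS' c[THEN conjunct2] ad_def by arith
      have e3: "ad (a!i) (a!(i+1)) = y - x" unfolding c[THEN conjunct1] c[THEN conjunct2] ad_def using assms(4) by arith
      show ?thesis unfolding e1 e2 e3 dS q_def[symmetric] using yp by auto
    qed
    from insert_lemma[OF assms(1,2) lS[unfolded q_def] sS[unfolded q_def] this[unfolded q_def] Sne[unfolded q_def]] show ?thesis
      unfolding p_def by blast
  next
    assume c: "a ! i = y \<and> a ! (i+1) = x"
    have lR: "length (rev ?S) = 2*p" using lS by simp
    have sR: "set (rev ?S) = {0..<p} \<union> {p + length a..<2*p + length a}" using sS q_def by simp
    have Rne: "rev ?S \<noteq> []" using Sne by simp
    have "dset (rev ?S) \<union> {ad (a!i + p) (hd (rev ?S)), ad (last (rev ?S)) (a!(i+1) + p)}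
              = {ad (a!i) (a!(i+1))} \<union> {length a..<2*p + length a}"
    proof -
      have hR: "hd (rev ?S) = p + y + q" using lS' Sne by (simp add: hd_rev)
      have lR': "last (rev ?S) = y" using hS Sne by (simp add: last_rev)
      have e1: "ad (a!i + p) (hd (rev ?S)) = q" unfolding hR c[THEN conjunct1] ad_def by arith
      have e2: "ad (last (rev ?S)) (a!(i+1) + p) = y - x" unfolding lR' c[THEN conjunct2] ad_def using assms(4,5) p_def by arith
      have e3: "ad (a!i) (a!(i+1)) = y - x" unfolding c[THEN conjunct1] c[THEN conjunct2] ad_def using assms(4) by arith
      show ?thesis unfolding e1 e2 e3 dset_rev dS q_def[symmetric] using yp by auto
    qed
    from insert_lemma[OF assms(1,2) lR[unfolded q_def] sR[unfolded q_def] this[unfolded q_def] Rne[unfolded q_def]] show ?thesis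
      unfolding p_def by blast
  qed
qed

end
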